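(* Every twofold partition having a representation in Model $F^{\underline u}$ has a representation in Model $F^{u}$, and there exist a finite product set $X$ and a (linear) twofold partition of $X$ satisfying the standing assumptions that has a representation in Model $F^{u}$ but none in Model $F^{\underline u}$.
   Context: Setting. $N=\{1,\dots,n\}$, $n\ge2$; $X=X_1\times\dots\times X_n$, each $X_i$ finite. $(y_i,x_{-i})$ denotes $x$ with $i$-th coordinate replaced by $y_i$. A twofold partition $\langle\mathcal A,\mathcal U\rangle$ of $X$: disjoint sets with union $X$. Define $x_i\succsim_i y_i$ iff [for all $a_{-i}\in\prod_{j\ne i}X_j$, $(y_i,a_{-i})\in\mathcal A\Rightarrow(x_i,a_{-i})\in\mathcal A$]. Standing assumptions: every attribute is influential (exist $x_i,y_i,a_{-i}$ with $(x_i,a_{-i})\in\mathcal A$, $(y_i,a_{-i})\in\mathcal U$) and each $\succsim_i$ is antisymmetric. $x\succsim y$ iff $x_i\succsim_i y_i$ for all $i$. Model $F^{u}$: there are semiorders $S_i$ on $X_i$ (reflexive, Ferrers: $xS_iy, zS_iw\Rightarrow xS_iw$ or $zS_iy$; semitransitive: $xS_iy, yS_iz\Rightarrow xS_iw$ or $wS_iz$), the relation $S$ on $X$ given by $xSy$ iff $x_iS_iy_i$ for all $i\in N$ with asymmetric part $P$, and a set $\mathcal P\subseteq X$ with no $p,q\in\mathcal P$ satisfying $pPq$, such that for all $x$: $x\in\mathcal U$ iff [$pPx$ for some $p\in\mathcal P$ and not $xPq$ for all $q\in\mathcal P$]. Model $F^{\underline u}$: Model $F^{u}$ with a representation in which $S_i=\succsim_i$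 for all $i$. *)

theory Defs
  imports "HOL-Library.FuncSet"
begin

text \<open>A twofold partition is given by its first class A (a subset of X); U = X - A.\<close>

definition prodX :: "nat \<Rightarrow> (nat \<Rightarrow> 'a set) \<Rightarrow> (nat \<Rightarrow> 'a) set" where
  "prodX n Xs = PiE {1..n} Xs"

definition others :: "nat \<Rightarrow> (nat \<Rightarrow> 'a set) \<Rightarrow> nat \<Rightarrow> (nat \<Rightarrow> 'a) set" where
  "others n Xs i = PiE ({1..n} - {i}) Xs"

definition pref :: "nat \<Rightarrow> (nat \<Rightarrow> 'a set) \<Rightarrow> (nat \<Rightarrow> 'a) set \<Rightarrow> nat \<Rightarrow> 'a \<Rightarrow> 'a \<Rightarrow> bool" where
  "pref n Xs A i xi yi \<longleftrightarrow>
     (\<forall>a \<in> others n Xs i. a(i := yi) \<in> A \<longrightarrow> a(i := xi) \<in> A)"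

definition twofold_partition :: "nat \<Rightarrow> (nat \<Rightarrow> 'a set) \<Rightarrow> (nat \<Rightarrow> 'a) set \<Rightarrow> bool" where
  "twofold_partition n Xs A \<longleftrightarrow> A \<subseteq> prodX n Xs"

definition standing :: "nat \<Rightarrow> (nat \<Rightarrow> 'a set) \<Rightarrow> (nat \<Rightarrow> 'a) set \<Rightarrow> bool" where
  "standing n Xs A \<longleftrightarrow>
     n \<ge> 2 \<and> (\<forall>i\<in>{1..n}. finite (Xs i)) \<and> twofold_partition n Xs A \<and>
     (\<forall>i\<in>{1..n}. \<exists>xi\<in>Xs i. \<exists>yi\<in>Xs i. \<exists>a\<in>others n Xs i.
         a(i := xi) \<in> A \<and> a(i := yi) \<notin> A) \<and>
     (\<forall>i\<in>{1..n}. \<forall>xi\<in>Xs i. \<forall>yi\<in>Xs i.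
         pref n Xs A i xi yi \<and> pref n Xs A i yi xi \<longrightarrow> xi = yi)"

definition linear_partition :: "nat \<Rightarrow> (nat \<Rightarrow> 'a set) \<Rightarrow> (nat \<Rightarrow> 'a) set \<Rightarrow> bool" where
  "linear_partition n Xs A \<longleftrightarrow>
     (\<forall>i\<in>{1..n}. \<forall>xi\<in>Xs i. \<forall>yi\<in>Xs i. pref n Xs A i xi yi \<or> pref n Xs A i yi xi)"

definition semiorder_on :: "'a set \<Rightarrow> ('a \<Rightarrow> 'a \<Rightarrow> bool) \<Rightarrow> bool" where
  "semiorder_on C R \<longleftrightarrow>
     (\<forall>x\<in>C. R x x) \<and>
     (\<forall>x\<in>C. \<forall>y\<in>C. \<forall>z\<in>C. \<forall>w\<in>C. R x y \<and> R z w \<longrightarrow> R x w \<or> R z y) \<and>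
     (\<forall>x\<in>C. \<forall>y\<in>C. \<forall>z\<in>C. \<forall>w\<in>C. R x y \<and> R y z \<longrightarrow> R x w \<or> R w z)"

definition Srel :: "nat \<Rightarrow> (nat \<Rightarrow> 'a \<Rightarrow> 'a \<Rightarrow> bool) \<Rightarrow> (nat \<Rightarrow> 'a) \<Rightarrow> (nat \<Rightarrow> 'a) \<Rightarrow> bool" where
  "Srel n S x y \<longleftrightarrow> (\<forall>i\<in>{1..n}. S i (x i) (y i))"

definition Prel :: "nat \<Rightarrow> (nat \<Rightarrow> 'a \<Rightarrow> 'a \<Rightarrow> bool) \<Rightarrow> (nat \<Rightarrow> 'a) \<Rightarrow> (nat \<Rightarrow> 'a) \<Rightarrow> bool" where
  "Prel n S x y \<longleftrightarrow> Srel n S x y \<and> \<not> Srel n S y x"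

definition rep_Fu :: "nat \<Rightarrow> (nat \<Rightarrow> 'a set) \<Rightarrow> (nat \<Rightarrow> 'a) set
    \<Rightarrow> (nat \<Rightarrow> 'a \<Rightarrow> 'a \<Rightarrow> bool) \<Rightarrow> (nat \<Rightarrow> 'a) set \<Rightarrow> bool" where
  "rep_Fu n Xs A S Pset \<longleftrightarrow>
     (\<forall>i\<in>{1..n}. semiorder_on (Xs i) (S i)) \<and>
     Pset \<subseteq> prodX n Xs \<and>
     (\<forall>p\<in>Pset. \<forall>q\<in>Pset. \<not> Prel n S p q) \<and>
     (\<forall>x\<in>prodX n Xs. x \<notin> A \<longleftrightarrow>
         ((\<exists>p\<in>Pset. Prel n S p x) \<and> (\<forall>q\<in>Pset. \<not> Prel n S x q)))"

definition model_Fu :: "nat \<Rightarrow> (nat \<Rightarrow> 'a set) \<Rightarrow> (nat \<Rightarrow> 'a) set \<Rightarrow> bool" where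
  "model_Fu n Xs A \<longleftrightarrow> (\<exists>S Pset. rep_Fu n Xs A S Pset)"

definition model_Fu_under :: "nat \<Rightarrow> (nat \<Rightarrow> 'a set) \<Rightarrow> (nat \<Rightarrow> 'a) set \<Rightarrow> bool" where
  "model_Fu_under n Xs A \<longleftrightarrow>
     (\<exists>S Pset. rep_Fu n Xs A S Pset \<and>
        (\<forall>i\<in>{1..n}. \<forall>xi\<in>Xs i. \<forall>yi\<in>Xs i. S i xi yi \<longleftrightarrow> pref n Xs A i xi yi))"

end

theory Submission
  imports Defs
begin

definition Xs0 :: "nat \<Rightarrow> nat set" where
  "Xs0 i = (if i = 1 then {0,1} else {0,1,2})"
definition A0 :: "(nat \<Rightarrow> nat) set" where
  "A0 = {x \<in> prodX 3 Xs0. x 1 = 1 \<and> 2 \<le> x 2 + x 3}"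
definition pt :: "nat \<Rightarrow> nat \<Rightarrow> nat \<Rightarrow> nat \<Rightarrow> nat" where
  "pt a b c = (\<lambda>i. if i = 1 then a else if i = 2 then b else if i = 3 then c else undefined)"

lemma three: "{1..3::nat} = {1,2,3}" by auto

lemma mem_prodX: "x \<in> prodX 3 Xs0 \<longleftrightarrow>
   x 1 \<in> {0,1} \<and> x 2 \<in> {0,1,2} \<and> x 3 \<in> {0,1,2} \<and> (\<forall>i. i \<notin> {1,2,3} \<longrightarrow> x i = undefined)"
  unfolding prodX_def PiE_iff extensional_def three Xs0_def by simp

lemma pt_prodX: "pt a b c \<in> prodX 3 Xs0 \<longleftrightarrow> a \<in> {0,1} \<and> b \<in> {0,1,2} \<and> c \<in> {0,1,2}"
  by (auto simp: mem_prodX pt_def)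

lemma Srel3: "Srel 3 S x y \<longleftrightarrow> S 1 (x 1) (y 1) \<and> S 2 (x 2) (y 2) \<and> S 3 (x 3) (y 3)"
  unfolding Srel_def three by simp

lemma upd_prodX:
  assumes "a \<in> others 3 Xs0 i" "i \<in> {1..3}"
  shows "a(i := v) \<in> prodX 3 Xs0 \<longleftrightarrow> v \<in> Xs0 i"
  using assms by (auto simp: others_def prodX_def PiE_iff extensional_def)

lemma pref_ge:
  assumes "i \<in> {1..3}" "u \<in> Xs0 i" "v \<le> u"
  shows "pref 3 Xs0 A0 i u v"
  unfolding pref_def
proof (intro ballI impI)
  fix a assume a: "a \<in> others 3 Xs0 i" and h: "a(i := v) \<in> A0"
  have "a(i := u) \<in> prodX 3 Xs0" using upd_prodX[OF a assms(1)] assms(2) by simp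
  moreover have "(a(i := u)) 1 = 1 \<and> 2 \<le> (a(i := u)) 2 + (a(i := u)) 3"
  proof -
    consider "i = 1" | "i = 2" | "i = 3" using assms(1) by force
    then show ?thesis using h assms(2,3) by cases (auto simp: A0_def Xs0_def)
  qed
  ultimately show "a(i := u) \<in> A0" by (simp add: A0_def)
qed

lemma pref_lt:
  assumes "i \<in> {1..3}" "u \<in> Xs0 i" "v \<in> Xs0 i" "u < v"
  shows "\<not> pref 3 Xs0 A0 i u v"
proof -
  consider "i = 1" | "i = 2" | "i = 3" using assms(1) by force
  then show ?thesis
  proof cases
    case 1
    define a where "a = (\<lambda>j::nat. if j = 2 then 1 else if j = 3 then (1::nat) else undefined)"
    have ao: "a \<in> others 3 Xs0 1" by (auto simp: a_def others_def PiE_iff extensional_def Xs0_def)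
    have "v = 1" "u = 0" using assms 1 by (auto simp: Xs0_def)
    then have "a(1 := v) \<in> A0" "a(1 := u) \<notin> A0"
      using 1 assms by (auto simp: A0_def mem_prodX a_def Xs0_def)
    then show ?thesis using ao 1 by (auto simp: pref_def)
  next
    case 2
    define a where "a = (\<lambda>j::nat. if j = 1 then 1 else if j = 3 then (2 - v) else undefined)"
    have ao: "a \<in> others 3 Xs0 2" using assms by (auto simp: a_def others_def PiE_iff extensional_def Xs0_def)
    have "a(2 := v) \<in> A0" "a(2 := u) \<notin> A0"
      using 2 assms by (auto simp: A0_def mem_prodX a_def Xs0_def)
    then show ?thesis using ao 2 by (auto simp: pref_def)
  next
    case 3
    define a where "a = (\<lambda>j::nat. if j = 1 then 1 else if j = 2 then (2 - v) else undefined)"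
    have ao: "a \<in> others 3 Xs0 3" using assms by (auto simp: a_def others_def PiE_iff extensional_def Xs0_def)
    have "a(3 := v) \<in> A0" "a(3 := u) \<notin> A0"
      using 3 assms by (auto simp: A0_def mem_prodX a_def Xs0_def)
    then show ?thesis using ao 3 by (auto simp: pref_def)
  qed
qed

lemma pref_iff:
  assumes "i \<in> {1..3}" "u \<in> Xs0 i" "v \<in> Xs0 i"
  shows "pref 3 Xs0 A0 i u v \<longleftrightarrow> v \<le> u"
  using pref_ge[OF assms(1,2)] pref_lt[OF assms] by force

definition S0 :: "nat \<Rightarrow> nat \<Rightarrow> nat \<Rightarrow> bool" where
  "S0 i a b = (if i = 1 then b \<le> a else b \<le> a + 1)"
definition P0 :: "(nat \<Rightarrow> nat) set" where
  "P0 = {pt 1 0 2, pt 1 1 1, pt 1 2 0}"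

lemma standing0: "standing 3 Xs0 A0"
proof -
  have infl: "\<exists>xi\<in>Xs0 i. \<exists>yi\<in>Xs0 i. \<exists>a\<in>others 3 Xs0 i. a(i := xi) \<in> A0 \<and> a(i := yi) \<notin> A0"
    if i: "i \<in> {1..3}" for i
  proof -
    have m: "0 \<in> Xs0 i" "1 \<in> Xs0 i" by (auto simp: Xs0_def)
    have "\<not> pref 3 Xs0 A0 i 0 1" using pref_lt[OF i m] by simp
    then show ?thesis using m unfolding pref_def by blast
  qed
  have anti: "\<forall>xi\<in>Xs0 i. \<forall>yi\<in>Xs0 i. pref 3 Xs0 A0 i xi yi \<and> pref 3 Xs0 A0 i yi xi \<longrightarrow> xi = yi"
    if i: "i \<in> {1..3}" for i
    using pref_iff[OF i] by auto
  have fin: "\<forall>i\<in>{1..3}. finite (Xs0 i)" by (simp add: Xs0_def)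
  have sub: "A0 \<subseteq> prodX 3 Xs0" by (auto simp: A0_def)
  show ?thesis unfolding standing_def twofold_partition_def
  proof (intro conjI)
    show "2 \<le> (3::nat)" by simp
  qed (use infl anti fin sub in blast)+
qed

lemma linear0: "linear_partition 3 Xs0 A0"
  unfolding linear_partition_def using pref_iff by fastforce

lemma semi0: "semiorder_on C (S0 i)"
  unfolding semiorder_on_def S0_def by auto

lemma repFu0: "rep_Fu 3 Xs0 A0 S0 P0"
  unfolding rep_Fu_def
proof (intro conjI ballI)
  show "\<And>i. semiorder_on (Xs0 i) (S0 i)" by (rule semi0)
  show "P0 \<subseteq> prodX 3 Xs0" by (auto simp: P0_def pt_prodX)
  show "\<And>p q. p \<in> P0 \<Longrightarrow> q \<in> P0 \<Longrightarrow> \<not> Prel 3 S0 p q"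
    by (auto simp: P0_def Prel_def Srel3 pt_def S0_def)
  fix x assume x: "x \<in> prodX 3 Xs0"
  then have h: "x 1 = 0 \<or> x 1 = 1" "x 2 = 0 \<or> x 2 = 1 \<or> x 2 = 2" "x 3 = 0 \<or> x 3 = 1 \<or> x 3 = 2"
    by (auto simp: mem_prodX)
  have A: "x \<in> A0 \<longleftrightarrow> x 1 = 1 \<and> 2 \<le> x 2 + x 3" using x by (simp add: A0_def)
  show "(x \<notin> A0) = ((\<exists>p\<in>P0. Prel 3 S0 p x) \<and> (\<forall>q\<in>P0. \<not> Prel 3 S0 x q))"
    unfolding A P0_def Prel_def Srel3
    using h by (elim disjE; simp add: pt_def S0_def)
qed

lemma not_under0: "\<not> model_Fu_under 3 Xs0 A0"
proof
  assume "model_Fu_under 3 Xs0 A0"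
  then obtain S P where rep: "rep_Fu 3 Xs0 A0 S P"
    and hS: "\<forall>i\<in>{1..3}. \<forall>xi\<in>Xs0 i. \<forall>yi\<in>Xs0 i. S i xi yi \<longleftrightarrow> pref 3 Xs0 A0 i xi yi"
    unfolding model_Fu_under_def by blast
  have Sr: "Srel 3 S u v \<longleftrightarrow> v 1 \<le> u 1 \<and> v 2 \<le> u 2 \<and> v 3 \<le> u 3"
    if "u \<in> prodX 3 Xs0" "v \<in> prodX 3 Xs0" for u v
  proof -
    have "\<forall>i\<in>{1..3}. u i \<in> Xs0 i \<and> v i \<in> Xs0 i" using that by (auto simp: prodX_def)
    then have "\<forall>i\<in>{1..3}. S i (u i) (v i) \<longleftrightarrow> v i \<le> u i" using hS pref_iff by auto
    then show ?thesis unfolding Srel3 by (simp add: three)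
  qed
  have PX: "P \<subseteq> prodX 3 Xs0" using rep by (simp add: rep_Fu_def)
  have anti: "\<And>p q. p \<in> P \<Longrightarrow> q \<in> P \<Longrightarrow> \<not> Prel 3 S p q" using rep by (simp add: rep_Fu_def)
  have main: "\<And>x. x \<in> prodX 3 Xs0 \<Longrightarrow> (x \<notin> A0) = ((\<exists>p\<in>P. Prel 3 S p x) \<and> (\<forall>q\<in>P. \<not> Prel 3 S x q))"
    using rep by (simp add: rep_Fu_def)
  define x where "x = pt 0 2 2"
  define y where "y = pt 1 0 2"
  have xX: "x \<in> prodX 3 Xs0" "y \<in> prodX 3 Xs0" by (auto simp: x_def y_def pt_prodX)
  have "x \<notin> A0" by (simp add: A0_def x_def pt_def)
  then obtain p where p: "p \<in> P" "Prel 3 S p x" using main[OF xX(1)] by blast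
  have pX: "p \<in> prodX 3 Xs0" using p PX by auto
  have pxy: "Prel 3 S p y" using p(2) unfolding Prel_def Sr[OF pX xX(1)] Sr[OF pX xX(2)] Sr[OF xX(1) pX] Sr[OF xX(2) pX]
    using pX[unfolded mem_prodX] by (auto simp: x_def y_def pt_def)
  have "y \<in> A0" using xX by (simp add: A0_def y_def pt_def)
  then obtain q where q: "q \<in> P" "Prel 3 S y q" using main[OF xX(2)] p pxy by blast
  have qX: "q \<in> prodX 3 Xs0" using q PX by auto
  have "Prel 3 S p q" using q(2) pxy unfolding Prel_def Sr[OF pX qX] Sr[OF qX pX] Sr[OF xX(2) qX] Sr[OF qX xX(2)]
      Sr[OF pX xX(2)] Sr[OF xX(2) pX] by linarith
  then show False using anti p q by blast
qed

theorem proposition4: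
  shows "(\<forall>(n::nat) (Xs :: nat \<Rightarrow> 'a set) A.
            standing n Xs A \<and> model_Fu_under n Xs A \<longrightarrow> model_Fu n Xs A)
       \<and> (\<exists>(n::nat) (Xs :: nat \<Rightarrow> nat set) A.
            standing n Xs A \<and> linear_partition n Xs A \<and>
            model_Fu n Xs A \<and> \<not> model_Fu_under n Xs A)"
proof
  show "\<forall>(n::nat) (Xs :: nat \<Rightarrow> 'a set) A.
            standing n Xs A \<and> model_Fu_under n Xs A \<longrightarrow> model_Fu n Xs A"
    unfolding model_Fu_under_def model_Fu_def by blast
  have "model_Fu 3 Xs0 A0" unfolding model_Fu_def using repFu0 by blast
  then show "\<exists>(n::nat) (Xs :: nat \<Rightarrow> nat set) A.
            standing n Xs A \<and> linear_partition n Xs A \<and>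
            model_Fu n Xs A \<and> \<not> model_Fu_under n Xs A"
    using standing0 linear0 not_under0 by blast
qed

end
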